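(* Let $\mu$ be a probability measure on $\mathbb T^d$, $\varepsilon>0$, and let $\alpha,R>0$ be constants such that $x\mapsto\mathrm{dist}(0_d,x)^2$ is $\alpha$-strongly convex on $B_{\mathbb T^d}(0_d,R)$. Let $x_0\in\mathbb T^d$, $r<R$, $Q=B_{\mathbb T^d}(x_0,r)$, and let $\nu$ be a probability density with $\nu(x)\in[m_\nu,M_\nu]$ for $x\in Q$ ($0<m_\nu\le M_\nu$); set $\nu_Q=\nu1_Q/\nu(Q)$. Let $\gamma_Q(x)=Z_Q^{-1}e^{-\frac1\alpha\mathrm{dist}(x_0,x)^2}1_Q(x)$ with $Z_Q=\int_Qe^{-\frac1\alpha\mathrm{dist}(x_0,x)^2}dx$, and for $\phi\in\mathcal C(\mathbb T^d)$ let $\gamma_Q[\phi](y)=\frac{\gamma_Q(y)e^{\mathcal T^\varepsilon_\mu[\phi](y)}}{\int_Qe^{\mathcal T^\varepsilon_\mu[\phi]}d\gamma_Q}$. Then for every $\phi\in\mathcal C(\mathbb T^d)$ and $y\in Q$, $$m_\nu e^{-\frac{r^2}{\alpha}-4\pi^2d}\cdot\frac{\mathrm{vol}(Q)}{\nu(Q)}\le\frac{\nu_Q(y)}{\gamma_Q[\phi](y)}\le M_\nu e^{\frac{r^2}{\alpha}+4\pi^2d}\cdot\frac{\mathrm{vol}(Q)}{\nu(Q)}.$$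
   Context: $\mathbb T^d=\mathbb R^d/2\pi\mathbb Z^d$ with $\mathrm{dist}(x,y)=\min_{k\in\mathbb Z^d}\|x-y-2\pi k\|$, $B_{\mathbb T^d}(x,r)$ the open ball, $\mathrm{vol}$ Lebesgue measure. $\alpha$-strong convexity on a geodesically convex set is defined along geodesic interpolants: $f(z)\le(1-\lambda)f(x_0)+\lambda f(x_1)-\frac{\alpha\lambda(1-\lambda)}2\mathrm{dist}(x_0,x_1)^2$ whenever $\mathrm{dist}(z,x_0)=\lambda\mathrm{dist}(x_0,x_1)$, $\mathrm{dist}(z,x_1)=(1-\lambda)\mathrm{dist}(x_0,x_1)$. $\mathcal K_\varepsilon(x)=(2\pi\varepsilon)^{-d/2}\sum_{k}e^{-\|x-2\pi k\|^2/(2\varepsilon)}$, $c_\varepsilon(x,y)=-\varepsilon\log\mathcal K_\varepsilon(x-y)$, $\mathcal T^\varepsilon_\mu[\phi](y)=-\varepsilon\log\int e^{(\phi(x)-c_\varepsilon(x,y))/\varepsilon}d\mu(x)$. *)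

theory Defs
  imports "HOL-Analysis.Analysis" "HOL-Probability.Probability"
begin

text \<open>The torus T^d = R^d / 2 pi Z^d is represented by R^d (type real^'n, d = CARD('n));
  points are representatives, functions on the torus are 2 pi Z^d-periodic functions,
  the fundamental cube [0,2 pi)^d is used for Lebesgue integration on the torus.\<close>

definition int_lattice :: "(real^'n) set" where
  "int_lattice = {k. \<forall>i. k $ i \<in> \<int>}"

definition torus_cube :: "(real^'n) set" where
  "torus_cube = {x. \<forall>i. 0 \<le> x $ i \<and> x $ i < 2 * pi}"

definition torus_periodic :: "(real^'n \<Rightarrow> 'b) \<Rightarrow> bool" where
  "torus_periodic f \<longleftrightarrow> (\<forall>x k. k \<in> int_lattice \<longrightarrow> f (x + (2 * pi) *\<^sub>R k) = f x)"

definition tdist :: "real^'n \<Rightarrow> real^'n \<Rightarrow> real" where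
  "tdist x y = Inf {norm (x - y - (2 * pi) *\<^sub>R k) | k. k \<in> int_lattice}"

definition tball :: "real^'n \<Rightarrow> real \<Rightarrow> (real^'n) set" where
  "tball x r = {y \<in> torus_cube. tdist x y < r}"

text \<open>alpha-strong convexity along geodesic interpolants on a set S.\<close>
definition torus_strongly_convex_on :: "(real^'n) set \<Rightarrow> real \<Rightarrow> (real^'n \<Rightarrow> real) \<Rightarrow> bool" where
  "torus_strongly_convex_on S \<alpha> f \<longleftrightarrow>
     (\<forall>x0\<in>S. \<forall>x1\<in>S. \<forall>t::real. \<forall>z\<in>S. 0 \<le> t \<and> t \<le> 1 \<and>
        tdist z x0 = t * tdist x0 x1 \<and> tdist z x1 = (1 - t) * tdist x0 x1 \<longrightarrow>
        f z \<le> (1 - t) * f x0 + t * f x1 - \<alpha> * t * (1 - t) / 2 * (tdist x0 x1)\<^sup>2)"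

definition heat_kernel :: "real \<Rightarrow> real^'n \<Rightarrow> real" where
  "heat_kernel \<epsilon> x = (2 * pi * \<epsilon>) powr (- (real CARD('n) / 2)) *
     infsum (\<lambda>k. exp (- (norm (x - (2 * pi) *\<^sub>R k))\<^sup>2 / (2 * \<epsilon>))) int_lattice"

definition cost_eps :: "real \<Rightarrow> real^'n \<Rightarrow> real^'n \<Rightarrow> real" where
  "cost_eps \<epsilon> x y = - \<epsilon> * ln (heat_kernel \<epsilon> (x - y))"

definition ctrans :: "real \<Rightarrow> (real^'n) measure \<Rightarrow> (real^'n \<Rightarrow> real) \<Rightarrow> real^'n \<Rightarrow> real" where
  "ctrans \<epsilon> \<mu> \<phi> y = - \<epsilon> * ln (\<integral>x. exp ((\<phi> x - cost_eps \<epsilon> x y) / \<epsilon>) \<partial>\<mu>)"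

end

theory Submission
  imports Defs
begin

definition gs :: "real \<Rightarrow> real \<Rightarrow> real" where
  "gs \<beta> u = exp (- (\<beta> * u\<^sup>2))"

definition Ps :: "real \<Rightarrow> real \<Rightarrow> real" where
  "Ps \<beta> c = (\<Sum>n. gs \<beta> (c + 2 * pi * real n))"

definition th :: "real \<Rightarrow> real \<Rightarrow> real" where
  "th \<beta> t = Ps \<beta> t + Ps \<beta> (2 * pi - t)"

lemma gs_pos: "gs \<beta> u > 0" by (simp add: gs_def)

lemma gs_le1: "\<beta> \<ge> 0 \<Longrightarrow> gs \<beta> u \<le> 1" by (simp add: gs_def)

lemma gs_even: "gs \<beta> (- u) = gs \<beta> u" by (simp add: gs_def)

lemma gs_mono: "\<beta> \<ge> 0 \<Longrightarrow> 0 \<le> u \<Longrightarrow> u \<le> v \<Longrightarrow> gs \<beta> v \<le> gs \<beta> u"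
  unfolding gs_def by (simp add: mult_left_mono power_mono)

lemma gs_summable:
  assumes b: "\<beta> > 0"
  shows "summable (\<lambda>n. gs \<beta> (c + 2 * pi * real n))"
proof -
  obtain N :: nat where N: "real N \<ge> \<bar>c\<bar> + 1" using real_arch_simple by blast
  have geo: "summable (\<lambda>n. exp (- \<beta> * c) * exp (- 2 * pi * \<beta>) ^ n)"
    using b by (intro summable_mult summable_geometric) simp
  show ?thesis
  proof (rule summable_comparison_test'[OF geo])
    fix n assume "n \<ge> N"
    hence "real n \<ge> \<bar>c\<bar> + 1" using N by linarith
    moreover have "2 * pi * real n \<ge> real n"
      using pi_gt3 by (intro mult_right_mono[of 1 "2*pi" "real n", simplified]) auto
    ultimately have u1: "c + 2 * pi * real n \<ge> 1" by linarith
    hence "(c + 2 * pi * real n) \<le> (c + 2 * pi * real n)\<^sup>2"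
      by (simp add: power2_eq_square)
    hence "\<beta> * (c + 2 * pi * real n) \<le> \<beta> * (c + 2 * pi * real n)\<^sup>2"
      using b by simp
    hence "gs \<beta> (c + 2 * pi * real n) \<le> exp (- (\<beta> * (c + 2 * pi * real n)))"
      unfolding gs_def by simp
    also have "\<dots> = exp (- \<beta> * c) * exp (- 2 * pi * \<beta>) ^ n"
      by (simp add: exp_add[symmetric] exp_of_nat_mult[symmetric] algebra_simps)
    finally show "norm (gs \<beta> (c + 2 * pi * real n)) \<le> exp (- \<beta> * c) * exp (- 2 * pi * \<beta>) ^ n"
      using gs_pos[of \<beta> "c + 2 * pi * real n"] by (simp add: abs_of_pos)
  qed
qed

lemma Ps_nonneg: "\<beta> > 0 \<Longrightarrow> Ps \<beta> c \<ge> 0"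
  unfolding Ps_def by (intro suminf_nonneg gs_summable) (auto intro: less_imp_le gs_pos)

lemma Ps_ge_head: "\<beta> > 0 \<Longrightarrow> Ps \<beta> c \<ge> (\<Sum>n<N. gs \<beta> (c + 2 * pi * real n))"
  unfolding Ps_def by (intro sum_le_suminf gs_summable) (auto intro: less_imp_le gs_pos)

lemma Ps_shift:
  assumes "\<beta> > 0"
  shows "Ps \<beta> c = gs \<beta> c + Ps \<beta> (c + 2 * pi)"
proof -
  have "(\<Sum>n. gs \<beta> (c + 2 * pi * real (Suc n))) = Ps \<beta> c - gs \<beta> (c + 2 * pi * real 0)"
    unfolding Ps_def by (rule suminf_split_head[OF gs_summable[OF assms]])
  moreover have "(\<lambda>n. gs \<beta> (c + 2 * pi * real (Suc n))) = (\<lambda>n. gs \<beta> (c + 2 * pi + 2 * pi * real n))"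
    by (simp add: algebra_simps)
  ultimately show ?thesis unfolding Ps_def by simp
qed

lemma th_shift:
  assumes b: "\<beta> > 0"
  shows "th \<beta> (t + 2 * pi) = th \<beta> t"
proof -
  have 1: "Ps \<beta> (t + 2 * pi) = Ps \<beta> t - gs \<beta> t" using Ps_shift[OF b, of t] by simp
  have 2: "Ps \<beta> (- t) = gs \<beta> t + Ps \<beta> (2 * pi - t)"
    using Ps_shift[OF b, of "-t"] by (simp add: gs_even)
  show ?thesis unfolding th_def using 1 2 by simp
qed

lemma th_even:
  assumes b: "\<beta> > 0"
  shows "th \<beta> (- t) = th \<beta> t"
proof -
  have 1: "Ps \<beta> (2 * pi + t) = Ps \<beta> t - gs \<beta> t" using Ps_shift[OF b, of t] by (simp add: add.commute)
  have 2: "Ps \<beta> (- t) = gs \<beta> t + Ps \<beta> (2 * pi - t)"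
    using Ps_shift[OF b, of "-t"] by (simp add: gs_even)
  show ?thesis unfolding th_def using 1 2 by simp
qed

lemma th_nat_shift:
  assumes b: "\<beta> > 0"
  shows "th \<beta> (t + 2 * pi * real n) = th \<beta> t"
proof (induction n)
  case (Suc n)
  have "th \<beta> (t + 2 * pi * real (Suc n)) = th \<beta> ((t + 2 * pi * real n) + 2 * pi)"
    by (simp add: algebra_simps)
  also have "\<dots> = th \<beta> t" using th_shift[OF b] Suc by simp
  finally show ?case .
qed simp

lemma th_int_shift:
  assumes b: "\<beta> > 0"
  shows "th \<beta> (t + 2 * pi * real_of_int k) = th \<beta> t"
proof (cases "k \<ge> 0")
  case True
  then obtain n where "k = int n" using nonneg_int_cases by blast
  then show ?thesis using th_nat_shift[OF b] by simp
next
  case False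
  then have "- k \<ge> 0" by simp
  then obtain n where n0: "- k = int n" using nonneg_int_cases by blast
  hence n: "k = - int n" by simp
  have "th \<beta> t = th \<beta> ((t + 2 * pi * real_of_int k) + 2 * pi * real n)"
    by (simp add: n)
  also have "\<dots> = th \<beta> (t + 2 * pi * real_of_int k)" using th_nat_shift[OF b] by blast
  finally show ?thesis by simp
qed

lemma th_reduce:
  assumes b: "\<beta> > 0"
  shows "\<exists>t'. 0 \<le> t' \<and> t' \<le> pi \<and> th \<beta> t = th \<beta> t'"
proof -
  define k where "k = \<lfloor>t / (2 * pi)\<rfloor>"
  define t1 where "t1 = t + 2 * pi * real_of_int (- k)"
  have "real_of_int k \<le> t / (2 * pi)" "t / (2 * pi) < real_of_int k + 1"
    unfolding k_def by linarith+
  hence "2 * pi * real_of_int k \<le> t" "t < 2 * pi * (real_of_int k + 1)"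
    using pi_gt_zero by (simp_all add: field_simps)
  hence t1: "0 \<le> t1" "t1 < 2 * pi" unfolding t1_def by (simp_all add: algebra_simps)
  have e1: "th \<beta> t1 = th \<beta> t" unfolding t1_def by (rule th_int_shift[OF b])
  show ?thesis
  proof (cases "t1 \<le> pi")
    case True then show ?thesis using t1 e1 by auto
  next
    case False
    have "2 * pi - t1 = - t1 + 2 * pi" by simp
    hence "th \<beta> (2 * pi - t1) = th \<beta> (- t1 + 2 * pi)" by simp
    also have "\<dots> = th \<beta> (- t1)" by (rule th_shift[OF b])
    also have "\<dots> = th \<beta> t1" by (rule th_even[OF b])
    finally show ?thesis using False t1 e1 by (intro exI[of _ "2 * pi - t1"]) auto
  qed
qed

lemma Ps_antimono:
  assumes b: "\<beta> > 0" and ab: "0 \<le> a" "a \<le> b'"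
  shows "Ps \<beta> b' \<le> Ps \<beta> a"
  unfolding Ps_def using b ab
  by (intro suminf_le gs_summable gs_mono) auto

lemma Ps_match:
  assumes b: "\<beta> > 0" and ab: "0 \<le> a" "a \<le> b'" "b' \<le> a + 2 * pi"
  shows "Ps \<beta> a - gs \<beta> a \<le> Ps \<beta> b'"
proof -
  have "Ps \<beta> (a + 2 * pi) \<le> Ps \<beta> b'"
    unfolding Ps_def using b ab pi_gt_zero
    by (intro suminf_le gs_summable gs_mono) auto
  thus ?thesis using Ps_shift[OF b, of a] by simp
qed

lemma th_crude:
  assumes b: "\<beta> > 0" and st: "0 \<le> s" "s \<le> 2 * pi" "0 \<le> t" "t \<le> 2 * pi"
  shows "th \<beta> t \<le> th \<beta> s + 1"
proof (cases "t \<le> s")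
  case True
  have "Ps \<beta> t - gs \<beta> t \<le> Ps \<beta> s" using st True by (intro Ps_match[OF b]) auto
  moreover have "Ps \<beta> (2 * pi - t) \<le> Ps \<beta> (2 * pi - s)" using st True by (intro Ps_antimono[OF b]) auto
  moreover have "gs \<beta> t \<le> 1" using b by (intro gs_le1) auto
  ultimately show ?thesis unfolding th_def by linarith
next
  case False
  have "Ps \<beta> (2 * pi - t) - gs \<beta> (2 * pi - t) \<le> Ps \<beta> (2 * pi - s)" using st False by (intro Ps_match[OF b]) auto
  moreover have "Ps \<beta> t \<le> Ps \<beta> s" using st False by (intro Ps_antimono[OF b]) auto
  moreover have "gs \<beta> (2 * pi - t) \<le> 1" using b by (intro gs_le1) auto
  ultimately show ?thesis unfolding th_def by linarith
qed

lemma Ps_lower: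
  assumes b: "\<beta> > 0" and s: "0 \<le> s" "s \<le> 2 * pi"
  shows "Ps \<beta> s \<ge> (\<Sum>n<N. gs \<beta> (2 * pi * real (Suc n)))"
proof -
  have "(\<Sum>n<N. gs \<beta> (2 * pi * real (Suc n))) \<le> (\<Sum>n<N. gs \<beta> (s + 2 * pi * real n))"
    using b s by (intro sum_mono gs_mono) (auto simp: algebra_simps)
  also have "\<dots> \<le> Ps \<beta> s" by (rule Ps_ge_head[OF b])
  finally show ?thesis .
qed

lemma th_lower:
  assumes b: "\<beta> > 0" and s: "0 \<le> s" "s \<le> 2 * pi"
  shows "th \<beta> s \<ge> 2 * real N * gs \<beta> (2 * pi * real N)"
proof -
  have "real N * gs \<beta> (2 * pi * real N) = (\<Sum>n<N. gs \<beta> (2 * pi * real N))" by simp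
  also have "\<dots> \<le> (\<Sum>n<N. gs \<beta> (2 * pi * real (Suc n)))"
    using b by (intro sum_mono gs_mono) auto
  finally have *: "real N * gs \<beta> (2 * pi * real N) \<le> (\<Sum>n<N. gs \<beta> (2 * pi * real (Suc n)))" .
  have "Ps \<beta> (2 * pi - s) \<ge> (\<Sum>n<N. gs \<beta> (2 * pi * real (Suc n)))"
    using s by (intro Ps_lower[OF b]) auto
  then show ?thesis using * Ps_lower[OF b s, of N]
    unfolding th_def by linarith
qed

lemma th_pos:
  assumes b: "\<beta> > 0" and s: "0 \<le> s" "s \<le> 2 * pi"
  shows "th \<beta> s \<ge> gs \<beta> s"
proof -
  have "gs \<beta> s \<le> Ps \<beta> s" using Ps_ge_head[OF b, of s 1] by simp
  thus ?thesis unfolding th_def using Ps_nonneg[OF b, of "2 * pi - s"] by simp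
qed

definition phis :: "real \<Rightarrow> real \<Rightarrow> real" where
  "phis \<beta> u = 2 * \<beta> * u * gs \<beta> u"

lemma abs_gauss_bound:
  assumes b: "\<beta> > 0"
  shows "sqrt \<beta> * \<bar>u\<bar> \<le> exp (\<beta> * u\<^sup>2 / 2)"
proof -
  define v where "v = sqrt \<beta> * \<bar>u\<bar>"
  have v2: "v\<^sup>2 = \<beta> * u\<^sup>2" unfolding v_def using b by (simp add: power_mult_distrib)
  have "0 \<le> (v - 1)\<^sup>2" by simp
  hence "v \<le> 1 + v\<^sup>2 / 2" by (simp add: power2_eq_square algebra_simps)
  also have "\<dots> \<le> exp (v\<^sup>2 / 2)" using exp_ge_add_one_self by blast
  finally show ?thesis unfolding v_def[symmetric] using v2 by simp
qed

lemma deriv_term_bound: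
  assumes b: "\<beta> > 0" and x: "x \<in> {-1<..<2*pi+1}"
  shows "norm (- (2 * \<beta> * (x + 2 * pi * real n) * gs \<beta> (x + 2 * pi * real n)))
         \<le> 2 * sqrt \<beta> * exp (\<beta> / 2) * exp (- pi * \<beta>) ^ n"
proof -
  define u where "u = x + 2 * pi * real n"
  have e1: "\<bar>u\<bar> * exp (- (\<beta> * u\<^sup>2 / 2)) \<le> 1 / sqrt \<beta>"
    using abs_gauss_bound[OF b, of u] b by (simp add: exp_minus field_simps)
  have e2: "- (\<beta> * u\<^sup>2 / 2) \<le> \<beta> / 2 - pi * \<beta> * real n"
  proof (cases "n = 0")
    case True
    have "0 \<le> \<beta> * u\<^sup>2" using b by simp
    then show ?thesis using True b by (simp del: mult_nonneg_nonneg)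
  next
    case False
    hence "real n \<ge> 1" by simp
    hence "2 * pi * real n \<ge> 2 * pi" using pi_gt_zero by simp
    hence u1: "u \<ge> 2 * pi * real n - 1" "2 * pi * real n - 1 \<ge> 1" using x pi_gt3 unfolding u_def by (simp_all; linarith)+
    hence "u \<le> u\<^sup>2" by (simp add: power2_eq_square)
    hence "2 * pi * real n - 1 \<le> u\<^sup>2" using u1 by linarith
    hence "\<beta> * (2 * pi * real n - 1) \<le> \<beta> * u\<^sup>2" using b by (intro mult_left_mono) auto
    then show ?thesis by (simp add: algebra_simps)
  qed
  have "norm (- (2 * \<beta> * u * gs \<beta> u)) = 2 * \<beta> * (\<bar>u\<bar> * exp (- (\<beta> * u\<^sup>2 / 2))) * exp (- (\<beta> * u\<^sup>2 / 2))"
    using b by (simp add: gs_def abs_mult exp_add[symmetric])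
  also have "\<dots> \<le> 2 * \<beta> * (1 / sqrt \<beta>) * exp (\<beta> / 2 - pi * \<beta> * real n)"
    using b e1 e2 by (intro mult_mono) auto
  also have "2 * \<beta> * (1 / sqrt \<beta>) = 2 * sqrt \<beta>"
    using b by (simp add: field_simps real_sqrt_mult[symmetric] del: real_sqrt_mult)
  also have "exp (\<beta> / 2 - pi * \<beta> * real n) = exp (\<beta> / 2) * exp (- pi * \<beta>) ^ n"
  proof -
    have "exp (\<beta> / 2 - pi * \<beta> * real n) = exp (\<beta> / 2 + real n * (- pi * \<beta>))"
      by (simp add: algebra_simps)
    also have "\<dots> = exp (\<beta> / 2) * exp (- pi * \<beta>) ^ n"
      by (simp only: exp_add exp_of_nat_mult)
    finally show ?thesis .
  qed
  finally show ?thesis unfolding u_def by (simp add: mult.assoc)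
qed

lemma Ps_deriv:
  assumes b: "\<beta> > 0" and x: "x \<in> {-1<..<2*pi+1}"
  shows "(Ps \<beta> has_field_derivative (\<Sum>n. - (2 * \<beta> * (x + 2 * pi * real n) * gs \<beta> (x + 2 * pi * real n)))) (at x)"
    and "summable (\<lambda>n. - (2 * \<beta> * (x + 2 * pi * real n) * gs \<beta> (x + 2 * pi * real n)))"
proof -
  define S where "S = {-1<..<2*pi+1::real}"
  have M: "summable (\<lambda>n. 2 * sqrt \<beta> * exp (\<beta> / 2) * exp (- pi * \<beta>) ^ n)"
    using b by (intro summable_mult summable_geometric) simp
  have unif: "uniformly_convergent_on S (\<lambda>n x. \<Sum>i<n. - (2 * \<beta> * (x + 2 * pi * real i) * gs \<beta> (x + 2 * pi * real i)))"
    by (rule Weierstrass_m_test'[OF _ M]) (use deriv_term_bound[OF b] S_def in auto)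
  have der: "((\<lambda>x. gs \<beta> (x + 2 * pi * real n)) has_field_derivative
        - (2 * \<beta> * (x + 2 * pi * real n) * gs \<beta> (x + 2 * pi * real n))) (at x within S)" for n x
    unfolding gs_def by (auto intro!: derivative_eq_intros simp: algebra_simps power2_eq_square)
  have "x \<in> interior S" using x unfolding S_def by (simp add: interior_open)
  from has_field_derivative_series'[OF _ der unif, of 0, OF _ _ _ this]
  have "((\<lambda>x. \<Sum>n. gs \<beta> (x + 2 * pi * real n)) has_field_derivative
        (\<Sum>n. - (2 * \<beta> * (x + 2 * pi * real n) * gs \<beta> (x + 2 * pi * real n)))) (at x)"
    using gs_summable[OF b, of 0] pi_gt3 unfolding S_def by auto
  moreover have "(\<lambda>x. \<Sum>n. gs \<beta> (x + 2 * pi * real n)) = Ps \<beta>" by (simp add: Ps_def fun_eq_iff)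
  ultimately show "(Ps \<beta> has_field_derivative (\<Sum>n. - (2 * \<beta> * (x + 2 * pi * real n) * gs \<beta> (x + 2 * pi * real n)))) (at x)"
    by simp
  show "summable (\<lambda>n. - (2 * \<beta> * (x + 2 * pi * real n) * gs \<beta> (x + 2 * pi * real n)))"
    by (rule summable_comparison_test[OF _ M]) (use deriv_term_bound[OF b x] in auto)
qed

lemma grid_match:
  fixes F :: "real \<Rightarrow> real"
  assumes nn: "\<And>u. 0 \<le> u \<Longrightarrow> 0 \<le> F u" and bd: "\<And>u. 0 \<le> u \<Longrightarrow> F u \<le> Mx"
    and up: "\<And>u v. 0 \<le> u \<Longrightarrow> u \<le> v \<Longrightarrow> v \<le> p \<Longrightarrow> F u \<le> F v"
    and down: "\<And>u v. p \<le> u \<Longrightarrow> u \<le> v \<Longrightarrow> F v \<le> F u"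
    and sb: "summable (\<lambda>n. F (b + 2 * pi * real n))"
    and sa: "summable (\<lambda>n. F (a + 2 * pi * real n))"
    and ab: "0 \<le> a" "a \<le> b" "b \<le> a + 2 * pi"
  shows "(\<Sum>n. F (a + 2 * pi * real n)) \<le> (\<Sum>n. F (b + 2 * pi * real n)) + Mx"
proof -
  define A where "A n = F (a + 2 * pi * real n)" for n
  define B where "B n = F (b + 2 * pi * real n)" for n
  have Mx0: "0 \<le> Mx" using nn[of 0] bd[of 0] by simp
  have Ann: "0 \<le> A n" for n unfolding A_def using ab by (intro nn) simp
  have Bnn: "0 \<le> B n" for n unfolding B_def using ab by (intro nn) simp
  obtain n0 :: nat where n0: "(p - b) / (2 * pi) < real n0" using reals_Archimedean2 by blast
  hence "p < b + 2 * pi * real n0" using pi_gt_zero by (simp add: field_simps)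
  define J where "J = (LEAST n. p < b + 2 * pi * real n)"
  have J1: "p < b + 2 * pi * real J" unfolding J_def by (rule LeastI) fact
  have J2: "b + 2 * pi * real n \<le> p" if "n < J" for n
    using not_less_Least[OF that[unfolded J_def]] by simp
  have inc: "A n \<le> B n" if "n < J" for n
    unfolding A_def B_def using ab J2[OF that] by (intro up) auto
  have dec: "A (Suc n) \<le> B n" if "J \<le> n" for n
  proof -
    have "2 * pi * real J \<le> 2 * pi * real n" using that pi_gt_zero by simp
    hence "p \<le> b + 2 * pi * real n" using J1 by linarith
    moreover have "b + 2 * pi * real n \<le> a + 2 * pi * real (Suc n)" using ab by (simp add: algebra_simps)
    ultimately show ?thesis unfolding A_def B_def by (intro down) auto
  qed
  have part1: "sum A {..<m} \<le> sum B {..<m}" if "m \<le> J" for m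
    using that by (intro sum_mono inc) auto
  have part2: "sum A {..<Suc m} \<le> sum B {..<m} + Mx" if "J \<le> m" for m
    using that
  proof (induction m rule: dec_induct)
    case base
    have "A J \<le> Mx" unfolding A_def using ab by (intro bd) simp
    then show ?case using part1[of J] by simp
  next
    case (step m)
    have "sum A {..<Suc (Suc m)} = sum A {..<Suc m} + A (Suc m)" by simp
    also have "\<dots> \<le> sum B {..<m} + Mx + B m" using step dec[of m] by simp
    also have "\<dots> = sum B {..<Suc m} + Mx" by simp
    finally show ?case .
  qed
  have sbB: "summable B" using sb unfolding B_def .
  have "sum A {..<m} \<le> suminf B + Mx" for m
  proof (cases "m \<le> J")
    case True
    have "sum B {..<m} \<le> suminf B" using sbB Bnn by (intro sum_le_suminf) auto
    then show ?thesis using part1[OF True] Mx0 by linarith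
  next
    case False
    have "sum A {..<m} \<le> sum A {..<Suc m}" using Ann by simp
    also have "\<dots> \<le> sum B {..<m} + Mx" using False by (intro part2) simp
    also have "sum B {..<m} \<le> suminf B" using sbB Bnn by (intro sum_le_suminf) auto
    finally show ?thesis by simp
  qed
  hence "suminf A \<le> suminf B + Mx" using sa unfolding A_def by (intro suminf_le_const) auto
  thus ?thesis unfolding A_def B_def .
qed

lemma phis_nonneg: "\<beta> > 0 \<Longrightarrow> 0 \<le> u \<Longrightarrow> 0 \<le> phis \<beta> u"
  unfolding phis_def using gs_pos[of \<beta> u] by simp

lemma phis_bound:
  assumes b: "\<beta> > 0" and u: "0 \<le> u"
  shows "phis \<beta> u \<le> sqrt (2 * \<beta>)"
proof -
  have b2: "2 * \<beta> > 0" using b by simp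
  have "sqrt (2 * \<beta>) * \<bar>u\<bar> \<le> exp (2 * \<beta> * u\<^sup>2 / 2)" by (rule abs_gauss_bound[OF b2])
  hence 1: "sqrt (2 * \<beta>) * u * gs \<beta> u \<le> 1"
    using u by (simp add: gs_def exp_minus field_simps)
  have "phis \<beta> u = sqrt (2 * \<beta>) * (sqrt (2 * \<beta>) * u * gs \<beta> u)"
    unfolding phis_def using b by (simp add: algebra_simps)
  also have "\<dots> \<le> sqrt (2 * \<beta>) * 1" using 1 b by (intro mult_left_mono) auto
  finally show ?thesis by simp
qed

lemma phis_deriv:
  "((phis \<beta>) has_real_derivative (2 * \<beta> * gs \<beta> u * (1 - 2 * \<beta> * u\<^sup>2))) (at u)"
  unfolding phis_def gs_def
  by (auto intro!: derivative_eq_intros simp: algebra_simps power2_eq_square)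

lemma phis_up:
  assumes b: "\<beta> > 0" and uv: "0 \<le> u" "u \<le> v" "v \<le> 1 / sqrt (2 * \<beta>)"
  shows "phis \<beta> u \<le> phis \<beta> v"
proof (rule deriv_nonneg_imp_mono[OF phis_deriv _ uv(2)])
  fix x assume x: "x \<in> {u..v}"
  have "x\<^sup>2 \<le> (1 / sqrt (2 * \<beta>))\<^sup>2" using x uv by (intro power_mono) auto
  also have "\<dots> = 1 / (2 * \<beta>)" using b by (simp add: power_divide)
  finally have "2 * \<beta> * x\<^sup>2 \<le> 1" using b by (simp add: field_simps)
  thus "0 \<le> 2 * \<beta> * gs \<beta> x * (1 - 2 * \<beta> * x\<^sup>2)"
    using b gs_pos[of \<beta> x] by simp
qed

lemma phis_down:
  assumes b: "\<beta> > 0" and uv: "1 / sqrt (2 * \<beta>) \<le> u" "u \<le> v"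
  shows "phis \<beta> v \<le> phis \<beta> u"
proof (rule deriv_nonpos_imp_antimono[OF phis_deriv _ uv(2)])
  fix x assume x: "x \<in> {u..v}"
  have "(1 / sqrt (2 * \<beta>))\<^sup>2 \<le> x\<^sup>2" using x uv b by (intro power_mono) auto
  moreover have "(1 / sqrt (2 * \<beta>))\<^sup>2 = 1 / (2 * \<beta>)" using b by (simp add: power_divide)
  ultimately have "1 \<le> 2 * \<beta> * x\<^sup>2" using b by (simp add: field_simps)
  thus "2 * \<beta> * gs \<beta> x * (1 - 2 * \<beta> * x\<^sup>2) \<le> 0"
    using b gs_pos[of \<beta> x] by (simp add: mult_nonneg_nonpos)
qed

definition Phis :: "real \<Rightarrow> real \<Rightarrow> real" where
  "Phis \<beta> c = (\<Sum>n. phis \<beta> (c + 2 * pi * real n))"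

lemma phis_summable:
  assumes b: "\<beta> > 0" and c: "c \<in> {-1<..<2*pi+1}"
  shows "summable (\<lambda>n. phis \<beta> (c + 2 * pi * real n))"
  using Ps_deriv(2)[OF b c] unfolding phis_def by (simp add: summable_minus_iff)

lemma Phis_shift:
  assumes b: "\<beta> > 0" and c: "c \<in> {-1<..<2*pi+1}"
  shows "summable (\<lambda>n. phis \<beta> (c + 2 * pi + 2 * pi * real n))"
    and "Phis \<beta> (c + 2 * pi) = Phis \<beta> c - phis \<beta> c"
proof -
  have s: "summable (\<lambda>n. phis \<beta> (c + 2 * pi * real n))" by (rule phis_summable[OF b c])
  have eq: "(\<lambda>n. phis \<beta> (c + 2 * pi * real (Suc n))) = (\<lambda>n. phis \<beta> (c + 2 * pi + 2 * pi * real n))"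
    by (simp add: algebra_simps)
  show "summable (\<lambda>n. phis \<beta> (c + 2 * pi + 2 * pi * real n))"
    using s unfolding summable_Suc_iff[symmetric, of "\<lambda>n. phis \<beta> (c + 2 * pi * real n)"] eq .
  show "Phis \<beta> (c + 2 * pi) = Phis \<beta> c - phis \<beta> c"
    using suminf_split_head[OF s] unfolding eq Phis_def by simp
qed

lemma Phis_diff:
  assumes b: "\<beta> > 0" and c: "0 \<le> c1" "c1 \<le> 2 * pi" "0 \<le> c2" "c2 \<le> 2 * pi"
  shows "Phis \<beta> c1 \<le> Phis \<beta> c2 + sqrt (2 * \<beta>)"
proof -
  have gm: "(\<Sum>n. phis \<beta> (a + 2 * pi * real n)) \<le> (\<Sum>n. phis \<beta> (b' + 2 * pi * real n)) + sqrt (2 * \<beta>)"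
    if "summable (\<lambda>n. phis \<beta> (b' + 2 * pi * real n))" "summable (\<lambda>n. phis \<beta> (a + 2 * pi * real n))"
       "0 \<le> a" "a \<le> b'" "b' \<le> a + 2 * pi" for a b'
    by (rule grid_match[where F = "phis \<beta>" and Mx = "sqrt (2 * \<beta>)" and p = "1 / sqrt (2 * \<beta>)"])
       (use that phis_nonneg[OF b] phis_bound[OF b] phis_up[OF b] phis_down[OF b] in auto)
  have c1S: "c1 \<in> {-1<..<2*pi+1}" and c2S: "c2 \<in> {-1<..<2*pi+1}" using c by auto
  show ?thesis
  proof (cases "c1 \<le> c2")
    case True
    show ?thesis unfolding Phis_def
      by (rule gm[OF phis_summable[OF b c2S] phis_summable[OF b c1S]]) (use c True in auto)
  next
    case False
    have "Phis \<beta> c1 \<le> Phis \<beta> (c2 + 2 * pi) + sqrt (2 * \<beta>)" unfolding Phis_def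
      by (rule gm[OF Phis_shift(1)[OF b c2S] phis_summable[OF b c1S]]) (use c False in auto)
    also have "Phis \<beta> (c2 + 2 * pi) \<le> Phis \<beta> c2"
      using Phis_shift(2)[OF b c2S] phis_nonneg[OF b c(3)] by simp
    finally show ?thesis by simp
  qed
qed

lemma Ps_deriv':
  assumes b: "\<beta> > 0" and x: "x \<in> {-1<..<2*pi+1}"
  shows "(Ps \<beta> has_field_derivative (- Phis \<beta> x)) (at x)"
proof -
  have "(\<Sum>n. - (2 * \<beta> * (x + 2 * pi * real n) * gs \<beta> (x + 2 * pi * real n))) = - Phis \<beta> x"
    unfolding Phis_def phis_def by (rule suminf_minus) (use phis_summable[OF b x] in \<open>simp add: phis_def\<close>)
  thus ?thesis using Ps_deriv(1)[OF b x] by simp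
qed

lemma th_deriv:
  assumes b: "\<beta> > 0" and x: "0 \<le> x" "x \<le> 2 * pi"
  shows "(th \<beta> has_field_derivative (Phis \<beta> (2 * pi - x) - Phis \<beta> x)) (at x)"
proof -
  have x1: "x \<in> {-1<..<2*pi+1}" and x2: "2 * pi - x \<in> {-1<..<2*pi+1}" using x by auto
  have d2: "((\<lambda>t. Ps \<beta> (2 * pi - t)) has_field_derivative (- Phis \<beta> (2 * pi - x)) * (- 1)) (at x)"
    by (rule DERIV_chain2[of "Ps \<beta>" "- Phis \<beta> (2 * pi - x)" "\<lambda>t. 2 * pi - t" x "-1" UNIV,
          OF Ps_deriv'[OF b x2]]) (auto intro!: derivative_eq_intros)
  have "((\<lambda>t. Ps \<beta> t + Ps \<beta> (2 * pi - t)) has_field_derivative (- Phis \<beta> x + (- Phis \<beta> (2 * pi - x)) * (- 1))) (at x)"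
    by (rule DERIV_add[OF Ps_deriv'[OF b x1] d2])
  moreover have "(\<lambda>t. Ps \<beta> t + Ps \<beta> (2 * pi - t)) = th \<beta>" by (simp add: th_def fun_eq_iff)
  ultimately show ?thesis by simp
qed

lemma th_lip_ord:
  assumes b: "\<beta> > 0" and st: "0 \<le> s" "s < t" "t \<le> pi"
  shows "\<bar>th \<beta> t - th \<beta> s\<bar> \<le> pi * sqrt (2 * \<beta>)"
proof -
  have der: "(th \<beta> has_field_derivative (Phis \<beta> (2 * pi - x) - Phis \<beta> x)) (at x)" if "s \<le> x" "x \<le> t" for x
    using st that pi_gt_zero by (intro th_deriv[OF b]) auto
  have cont: "continuous_on {s..t} (th \<beta>)"
    using der by (intro continuous_at_imp_continuous_on ballI DERIV_isCont) auto
  have "\<exists>l z. s < z \<and> z < t \<and> DERIV (th \<beta>) z :> l \<and> th \<beta> t - th \<beta> s = (t - s) * l"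
    by (rule MVT[OF st(2) cont]) (metis der less_imp_le real_differentiable_def)
  then obtain l z where z: "s < z" "z < t" "DERIV (th \<beta>) z :> l" "th \<beta> t - th \<beta> s = (t - s) * l"
    by blast
  have "l = Phis \<beta> (2 * pi - z) - Phis \<beta> z" using DERIV_unique[OF z(3) der[of z]] z by auto
  moreover have "Phis \<beta> (2 * pi - z) \<le> Phis \<beta> z + sqrt (2 * \<beta>)" "Phis \<beta> z \<le> Phis \<beta> (2 * pi - z) + sqrt (2 * \<beta>)"
    using z st pi_gt_zero by (intro Phis_diff[OF b]; simp; linarith)+
  ultimately have "\<bar>l\<bar> \<le> sqrt (2 * \<beta>)" by linarith
  hence "\<bar>th \<beta> t - th \<beta> s\<bar> \<le> (t - s) * sqrt (2 * \<beta>)" using z st by (simp add: abs_mult mult_left_mono)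
  also have "\<dots> \<le> pi * sqrt (2 * \<beta>)" using st b by (intro mult_right_mono) auto
  finally show ?thesis .
qed

lemma th_lip:
  assumes b: "\<beta> > 0" and st: "0 \<le> s" "s \<le> pi" "0 \<le> t" "t \<le> pi"
  shows "th \<beta> t \<le> th \<beta> s + pi * sqrt (2 * \<beta>)"
proof -
  consider "s < t" | "s = t" | "t < s" by linarith
  then show ?thesis
  proof cases
    case 1 then show ?thesis using th_lip_ord[OF b st(1) 1 st(4)] by linarith
  next
    case 2 then show ?thesis using b by auto
  next
    case 3 then show ?thesis using th_lip_ord[OF b st(3) 3 st(2)] by linarith
  qed
qed

lemma th_ratio_red:
  assumes b: "\<beta> > 0" and st: "0 \<le> s" "s \<le> pi" "0 \<le> t" "t \<le> pi"
  shows "th \<beta> t \<le> exp (8 * pi\<^sup>2 * \<beta>) * th \<beta> s"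
proof -
  have s2: "0 \<le> s" "s \<le> 2 * pi" and t2: "0 \<le> t" "t \<le> 2 * pi" using st pi_gt_zero by auto
  have "s\<^sup>2 \<le> pi\<^sup>2" using st by (intro power_mono) auto
  hence "\<beta> * s\<^sup>2 \<le> \<beta> * pi\<^sup>2" using b by (intro mult_left_mono) auto
  hence "exp (- (pi\<^sup>2 * \<beta>)) \<le> gs \<beta> s" unfolding gs_def by (simp add: mult.commute)
  hence lowS: "exp (- (pi\<^sup>2 * \<beta>)) \<le> th \<beta> s" using th_pos[OF b s2] by linarith
  show ?thesis
  proof (cases "\<beta> \<ge> 1 / (8 * pi\<^sup>2)")
    case True
    define z where "z = pi\<^sup>2 * \<beta>"
    have z: "z \<ge> 1 / 8" unfolding z_def using True pi_gt_zero by (simp add: field_simps)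
    have "1 + 7 * z + (7 * z)\<^sup>2 / 2 \<le> exp (7 * z)" using z by (intro exp_lower_Taylor_quadratic) auto
    moreover have z0: "0 \<le> z" using z by linarith
    moreover have "(7 * z)\<^sup>2 / 2 \<ge> (7 / 8)\<^sup>2 / 2" using z z0 by (intro divide_right_mono power_mono) auto
    ultimately have e7: "2 \<le> exp (7 * z)" using z by (simp add: power2_eq_square)
    have "1 \<le> exp z * th \<beta> s" using lowS unfolding z_def[symmetric]
      by (simp add: exp_minus field_simps)
    hence "th \<beta> t \<le> th \<beta> s + exp z * th \<beta> s" using th_crude[OF b s2 t2] by linarith
    also have "\<dots> = (1 + exp z) * th \<beta> s" by (simp add: algebra_simps)
    also have "(1 + exp z) \<le> exp (8 * z)"
    proof -
      have "1 + exp z \<le> 2 * exp z" using z0 by simp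
      also have "\<dots> \<le> exp (7 * z) * exp z" using e7 by simp
      also have "\<dots> = exp (8 * z)" by (simp add: exp_add[symmetric])
      finally show ?thesis .
    qed
    hence "(1 + exp z) * th \<beta> s \<le> exp (8 * z) * th \<beta> s"
      using th_pos[OF b s2] gs_pos[of \<beta> s] by (intro mult_right_mono) auto
    finally show ?thesis unfolding z_def by (simp add: algebra_simps)
  next
    case False
    define w where "w = sqrt (2 * \<beta>)"
    have w: "w > 0" unfolding w_def using b by simp
    have w2: "w\<^sup>2 = 2 * \<beta>" unfolding w_def using b by simp
    define x where "x = 1 / (2 * pi * w)"
    have "8 * pi\<^sup>2 * \<beta> < 1" using False pi_gt_zero by (simp add: field_simps)
    hence "(2 * pi * w)\<^sup>2 < 1" using w2 by (simp add: power_mult_distrib)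
    hence "2 * pi * w < 1" using w pi_gt_zero by (smt (verit) one_le_power)
    hence x1: "x > 1" unfolding x_def using w pi_gt_zero by (simp add: field_simps)
    define N where "N = nat \<lfloor>x\<rfloor>"
    have N1: "real N \<le> x" "x < real N + 1" unfolding N_def using x1 by linarith+
    have "real N > 0" using N1 x1 by linarith
    hence "N \<ge> 1" by simp
    hence N0: "real N \<ge> 1" by simp
    have xN: "x \<le> 2 * real N" using N1 N0 by linarith
    have "\<beta> * (2 * pi * real N)\<^sup>2 \<le> \<beta> * (2 * pi * x)\<^sup>2"
      using N1 N0 b by (intro mult_left_mono power_mono) auto
    also have "\<beta> * (2 * pi * x)\<^sup>2 = 1 / 2"
      unfolding x_def using w pi_gt_zero w2 b by (simp add: power_mult_distrib field_simps)
    finally have "exp (- (1 / 2)) \<le> gs \<beta> (2 * pi * real N)" unfolding gs_def by simp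
    hence "x * exp (- (1 / 2)) \<le> 2 * real N * gs \<beta> (2 * pi * real N)"
      using xN x1 by (intro mult_mono) auto
    hence lowS2: "x * exp (- (1 / 2)) \<le> th \<beta> s" using th_lower[OF b s2, of N] by linarith
    have eh: "exp (- (1 / 2)) \<ge> (1::real) / 2" using exp_half_le2 by (simp add: exp_minus field_simps)
    have "8 * pi\<^sup>2 * \<beta> = 4 * pi\<^sup>2 * w\<^sup>2" using w2 by simp
    hence e8: "exp (8 * pi\<^sup>2 * \<beta>) - 1 \<ge> 4 * pi\<^sup>2 * w\<^sup>2" using exp_ge_add_one_self[of "8 * pi\<^sup>2 * \<beta>"] by linarith
    have "pi * w \<le> 4 * pi\<^sup>2 * w\<^sup>2 * (x * (1 / 2))"
      unfolding x_def using w pi_gt_zero by (simp add: power2_eq_square field_simps)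
    also have "\<dots> \<le> (exp (8 * pi\<^sup>2 * \<beta>) - 1) * (x * exp (- (1 / 2)))"
      using e8 eh x1 b by (intro mult_mono) auto
    also have "\<dots> \<le> (exp (8 * pi\<^sup>2 * \<beta>) - 1) * th \<beta> s"
      using lowS2 e8 w b by (intro mult_left_mono) auto
    finally have "pi * w \<le> (exp (8 * pi\<^sup>2 * \<beta>) - 1) * th \<beta> s" .
    moreover have "th \<beta> t \<le> th \<beta> s + pi * w" unfolding w_def by (rule th_lip[OF b st])
    ultimately show ?thesis by (simp add: algebra_simps)
  qed
qed

lemma th_ratio:
  assumes b: "\<beta> > 0"
  shows "th \<beta> t \<le> exp (8 * pi\<^sup>2 * \<beta>) * th \<beta> s"
proof -
  obtain s' where s': "0 \<le> s'" "s' \<le> pi" "th \<beta> s = th \<beta> s'" using th_reduce[OF b] by blast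
  obtain t' where t': "0 \<le> t'" "t' \<le> pi" "th \<beta> t = th \<beta> t'" using th_reduce[OF b] by blast
  show ?thesis using th_ratio_red[OF b s'(1,2) t'(1,2)] s'(3) t'(3) by simp
qed

lemma th_pos_all:
  assumes b: "\<beta> > 0"
  shows "th \<beta> t > 0"
proof -
  obtain t' where t': "0 \<le> t'" "t' \<le> pi" "th \<beta> t = th \<beta> t'" using th_reduce[OF b] by blast
  have "gs \<beta> t' \<le> th \<beta> t'" using t' pi_gt_zero by (intro th_pos[OF b]) auto
  thus ?thesis using gs_pos[of \<beta> t'] t' by simp
qed

lemma th_has_sum_Ints:
  assumes b: "\<beta> > 0"
  shows "((\<lambda>m. gs \<beta> (t - 2 * pi * m)) has_sum th \<beta> t) \<int>"
proof -
  define A where "A = range (\<lambda>n::nat. - real n)"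
  define B where "B = range (\<lambda>n::nat. real n + 1)"
  have s1: "((\<lambda>n. gs \<beta> (t + 2 * pi * real n)) has_sum Ps \<beta> t) UNIV"
    unfolding Ps_def using gs_summable[OF b, of t] gs_pos
    by (intro sums_nonneg_imp_has_sum summable_sums) (auto intro: less_imp_le)
  have s2: "((\<lambda>n. gs \<beta> (2 * pi - t + 2 * pi * real n)) has_sum Ps \<beta> (2 * pi - t)) UNIV"
    unfolding Ps_def using gs_summable[OF b, of "2 * pi - t"] gs_pos
    by (intro sums_nonneg_imp_has_sum summable_sums) (auto intro: less_imp_le)
  have iA: "inj (\<lambda>n::nat. - real n)" by (auto simp: inj_def)
  have iB: "inj (\<lambda>n::nat. real n + 1)" by (auto simp: inj_def)
  have hA: "((\<lambda>m. gs \<beta> (t - 2 * pi * m)) has_sum Ps \<beta> t) A"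
    unfolding A_def has_sum_reindex[OF iA] using s1 by (simp add: o_def)
  have "(\<lambda>n. gs \<beta> (t - 2 * pi * (real n + 1))) = (\<lambda>n. gs \<beta> (2 * pi - t + 2 * pi * real n))"
    by (rule ext, subst gs_even[symmetric]) (simp add: algebra_simps)
  hence hB: "((\<lambda>m. gs \<beta> (t - 2 * pi * m)) has_sum Ps \<beta> (2 * pi - t)) B"
    unfolding B_def has_sum_reindex[OF iB] using s2 by (simp add: o_def)
  have disj: "A \<inter> B = {}" unfolding A_def B_def
    by auto
  have AB: "A \<union> B = \<int>"
  proof (intro equalityI subsetI)
    fix m assume "m \<in> A \<union> B" thus "m \<in> \<int>" unfolding A_def B_def by auto
  next
    fix m :: real assume "m \<in> \<int>"
    then obtain k where k: "m = of_int k" by (auto elim: Ints_cases)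
    show "m \<in> A \<union> B"
    proof (cases "k \<le> 0")
      case True
      hence "m = - real (nat (- k))" using k by simp
      thus ?thesis unfolding A_def by blast
    next
      case False
      hence "m = real (nat (k - 1)) + 1" using k by simp
      thus ?thesis unfolding B_def by blast
    qed
  qed
  show ?thesis using has_sum_Un_disjoint[OF hA hB disj] unfolding AB th_def .
qed

lemma heat_kernel_prod:
  fixes x :: "real^'n"
  assumes e: "\<epsilon> > 0"
  shows "heat_kernel \<epsilon> x = (2 * pi * \<epsilon>) powr (- (real CARD('n) / 2)) * (\<Prod>i\<in>UNIV. th (1 / (2 * \<epsilon>)) (x $ i))"
proof -
  define \<beta> where "\<beta> = 1 / (2 * \<epsilon>)"
  have b: "\<beta> > 0" unfolding \<beta>_def using e by simp
  define f where "f i m = gs \<beta> (x $ i - 2 * pi * m)" for i m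
  have hterm: "exp (- (norm (x - (2 * pi) *\<^sub>R k))\<^sup>2 / (2 * \<epsilon>)) = (\<Prod>i\<in>UNIV. f i (k $ i))" for k :: "real^'n"
  proof -
    have "(norm (x - (2 * pi) *\<^sub>R k))\<^sup>2 = (\<Sum>i\<in>UNIV. (x $ i - 2 * pi * k $ i)\<^sup>2)"
      unfolding power2_norm_eq_inner by (simp add: inner_vec_def power2_eq_square)
    hence "- (norm (x - (2 * pi) *\<^sub>R k))\<^sup>2 / (2 * \<epsilon>) = (\<Sum>i\<in>UNIV. - (\<beta> * (x $ i - 2 * pi * k $ i)\<^sup>2))"
      unfolding \<beta>_def by (simp add: sum_divide_distrib sum_negf)
    thus ?thesis unfolding f_def gs_def by (simp add: exp_sum)
  qed
  have lat: "(int_lattice :: (real^'n) set) = (\<lambda>p. vec_lambda p) ` (PiE UNIV (\<lambda>_. \<int>))"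
  proof (intro equalityI subsetI)
    fix k :: "real^'n" assume "k \<in> int_lattice"
    hence "(\<lambda>i. k $ i) \<in> PiE UNIV (\<lambda>_. \<int>)" unfolding int_lattice_def by auto
    moreover have "k = vec_lambda (\<lambda>i. k $ i)" by simp
    ultimately show "k \<in> (\<lambda>p. vec_lambda p) ` (PiE UNIV (\<lambda>_. \<int>))" by blast
  next
    fix k :: "real^'n" assume "k \<in> (\<lambda>p. vec_lambda p) ` (PiE UNIV (\<lambda>_. \<int>))"
    thus "k \<in> int_lattice" unfolding int_lattice_def by auto
  qed
  have inj: "inj_on (\<lambda>p. vec_lambda p :: real^'n) (PiE UNIV (\<lambda>_. \<int>))"
    by (auto simp: inj_on_def vec_lambda_inject)
  have "infsum (\<lambda>k. exp (- (norm (x - (2 * pi) *\<^sub>R k))\<^sup>2 / (2 * \<epsilon>))) int_lattice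
      = infsum (\<lambda>k. \<Prod>i\<in>UNIV. f i (k $ i)) int_lattice"
    using hterm by simp
  also have "\<dots> = infsum (\<lambda>p. \<Prod>i\<in>UNIV. f i (p i)) (PiE UNIV (\<lambda>_. \<int>))"
    unfolding lat infsum_reindex[OF inj] by (simp add: o_def)
  also have "\<dots> = (\<Prod>i\<in>UNIV. infsum (f i) \<int>)"
  proof (rule infsum_prod_PiE_abs)
    fix i :: 'n
    have "f i summable_on \<int>" unfolding f_def using th_has_sum_Ints[OF b] by (auto simp: summable_on_def)
    thus "(\<lambda>y. norm (f i y)) summable_on \<int>" using summable_on_iff_abs_summable_on_real by blast
  qed simp
  also have "\<dots> = (\<Prod>i\<in>UNIV. th \<beta> (x $ i))"
    unfolding f_def by (intro prod.cong refl infsumI th_has_sum_Ints[OF b])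
  finally show ?thesis unfolding heat_kernel_def \<beta>_def by simp
qed

lemma zero_in_lattice: "0 \<in> int_lattice"
  unfolding int_lattice_def by simp

lemma tdist_le:
  fixes x y k :: "real^'n"
  assumes "k \<in> int_lattice"
  shows "tdist x y \<le> norm (x - y - (2 * pi) *\<^sub>R k)"
  unfolding tdist_def
  by (rule cInf_lower) (use assms in \<open>auto intro!: bdd_belowI[of _ 0]\<close>)

lemma tdist_nonneg: "0 \<le> tdist (x::real^'n) y"
  unfolding tdist_def
  by (rule cInf_greatest) (use zero_in_lattice in auto)

lemma tdist_lip1:
  fixes x y z :: "real^'n"
  shows "tdist x y \<le> tdist x z + norm (y - z)"
proof -
  have "tdist x y - norm (y - z) \<le> tdist x z"
    unfolding tdist_def[of x z]
  proof (rule cInf_greatest)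
    show "{norm (x - z - (2 * pi) *\<^sub>R k) |k. k \<in> int_lattice} \<noteq> {}" using zero_in_lattice by auto
  next
    fix a assume "a \<in> {norm (x - z - (2 * pi) *\<^sub>R k) |k. k \<in> int_lattice}"
    then obtain k where k: "k \<in> int_lattice" "a = norm (x - z - (2 * pi) *\<^sub>R k)" by auto
    have "tdist x y \<le> norm (x - y - (2 * pi) *\<^sub>R k)" by (rule tdist_le[OF k(1)])
    also have "\<dots> \<le> norm (x - z - (2 * pi) *\<^sub>R k) + norm (y - z)"
      using norm_triangle_ineq[of "x - z - (2 * pi) *\<^sub>R k" "z - y"]
      by (simp add: algebra_simps norm_minus_commute)
    finally show "tdist x y - norm (y - z) \<le> a" using k by simp
  qed
  thus ?thesis by simp
qed

lemma tdist_cont: "continuous_on UNIV (tdist (x::real^'n))"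
proof (rule lipschitz_on_continuous_on)
  show "1-lipschitz_on UNIV (tdist x)"
  proof (rule lipschitz_onI)
    fix y z :: "real^'n"
    have "tdist x y \<le> tdist x z + norm (y - z)" "tdist x z \<le> tdist x y + norm (z - y)"
      by (rule tdist_lip1)+
    thus "dist (tdist x y) (tdist x z) \<le> 1 * dist y z"
      by (simp add: dist_real_def dist_norm norm_minus_commute abs_le_iff)
  qed simp
qed

lemma tdist_meas[measurable]: "tdist (x::real^'n) \<in> borel_measurable borel"
  by (rule borel_measurable_continuous_onI[OF tdist_cont])

lemma vec_nth_meas: "(\<lambda>x::real^'n. x $ i) \<in> borel_measurable borel"
  by (intro borel_measurable_continuous_onI continuous_on_component continuous_on_id)

lemma torus_cube_sets: "(torus_cube :: (real^'n) set) \<in> sets borel"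
proof -
  have vs: "(\<lambda>x::real^'n. x $ i) -` {0..<2*pi} \<in> sets borel" for i
    using measurable_sets[OF vec_nth_meas[of i], of "{0..<2*pi}"] by simp
  have "(torus_cube :: (real^'n) set) = (\<Inter>i. (\<lambda>x::real^'n. x $ i) -` {0..<2*pi})"
    unfolding torus_cube_def by auto
  also have "\<dots> \<in> sets borel"
    by (intro sets.finite_INT) (auto intro!: vs)
  finally show ?thesis .
qed

lemma torus_cube_sub: "(torus_cube :: (real^'n) set) \<subseteq> cbox 0 (\<chi> i. 2 * pi)"
  unfolding torus_cube_def by (auto simp: mem_box_cart less_imp_le)

lemma tball_sets: "tball (x0::real^'n) r \<in> sets borel"
proof -
  have "tball x0 r = torus_cube \<inter> (tdist x0 -` {..<r} \<inter> space borel)"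
    unfolding tball_def by auto
  also have "\<dots> \<in> sets borel"
    by (intro sets.Int torus_cube_sets measurable_sets[OF tdist_meas]) auto
  finally show ?thesis .
qed

lemma tball_fin: "emeasure lborel (tball (x0::real^'n) r) < \<infinity>"
proof -
  have "emeasure lborel (tball x0 r) \<le> emeasure lborel (cbox (0::real^'n) (\<chi> i. 2 * pi))"
    using torus_cube_sub unfolding tball_def by (intro emeasure_mono) auto
  also have "\<dots> < \<infinity>" by (rule emeasure_lborel_cbox_finite)
  finally show ?thesis .
qed

lemma tball_fmeas: "tball (x0::real^'n) r \<in> fmeasurable lborel"
  using tball_sets tball_fin by (intro fmeasurableI) auto

lemma tball_pos:
  fixes x0 :: "real^'n"
  assumes r: "r > 0"
  shows "measure lborel (tball x0 r) > 0"
proof -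
  define d where "d = real CARD('n)"
  have d: "d \<ge> 1" unfolding d_def by simp
  define k :: "real^'n" where "k = (\<chi> i. of_int \<lfloor>x0 $ i / (2 * pi)\<rfloor>)"
  define p where "p = x0 - (2 * pi) *\<^sub>R k"
  have kl: "k \<in> int_lattice" unfolding k_def int_lattice_def by auto
  have p: "0 \<le> p $ i" "p $ i < 2 * pi" for i
  proof -
    define y where "y = x0 $ i / (2 * pi)"
    have y: "2 * pi * y = x0 $ i" unfolding y_def by simp
    have "of_int \<lfloor>y\<rfloor> \<le> y" "y < of_int \<lfloor>y\<rfloor> + 1"
      by linarith+
    hence "2 * pi * of_int \<lfloor>y\<rfloor> \<le> 2 * pi * y" "2 * pi * y < 2 * pi * (of_int \<lfloor>y\<rfloor> + 1)"
      using pi_gt_zero by (intro mult_left_mono mult_strict_left_mono; simp)+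
    hence "2 * pi * of_int \<lfloor>x0 $ i / (2 * pi)\<rfloor> \<le> x0 $ i" "x0 $ i < 2 * pi * (of_int \<lfloor>x0 $ i / (2 * pi)\<rfloor> + 1)"
      by (simp_all add: y_def)
    thus "0 \<le> p $ i" "p $ i < 2 * pi" unfolding p_def k_def by (simp_all add: algebra_simps)
  qed
  define q :: "real^'n" where "q = (\<chi> i. p $ i + min (r / (2 * d)) ((2 * pi - p $ i) / 2))"
  have dpos: "min (r / (2 * d)) ((2 * pi - p $ i) / 2) > 0" for i using r d p[of i] by auto
  have pq: "p $ i \<le> q $ i" for i unfolding q_def using dpos[of i] by simp
  have sub: "cbox p q \<subseteq> tball x0 r"
  proof
    fix z assume z: "z \<in> cbox p q"
    have zi: "p $ i \<le> z $ i" "z $ i \<le> p $ i + min (r / (2 * d)) ((2 * pi - p $ i) / 2)" for i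
      using z unfolding mem_box_cart q_def by auto
    have "z \<in> torus_cube" unfolding torus_cube_def
    proof (intro CollectI allI conjI)
      fix i show "0 \<le> z $ i" using zi[of i] p[of i] by linarith
      have "min (r / (2 * d)) ((2 * pi - p $ i) / 2) \<le> (2 * pi - p $ i) / 2" by (rule min.cobounded2)
      hence "z $ i \<le> p $ i + (2 * pi - p $ i) / 2" using zi(2)[of i] by (rule_tac order_trans, auto)
      moreover have "p $ i + (2 * pi - p $ i) / 2 < 2 * pi" using p[of i] by (simp add: field_simps)
      ultimately show "z $ i < 2 * pi" by linarith
    qed
    moreover have "tdist x0 z < r"
    proof -
      have "tdist x0 z \<le> norm (x0 - z - (2 * pi) *\<^sub>R k)" by (rule tdist_le[OF kl])
      also have "x0 - z - (2 * pi) *\<^sub>R k = p - z" unfolding p_def by simp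
      also have "norm (p - z) \<le> (\<Sum>i\<in>UNIV. \<bar>(p - z) $ i\<bar>)" by (rule norm_le_l1_cart)
      also have "\<dots> \<le> (\<Sum>i\<in>(UNIV::'n set). r / (2 * d))"
      proof (rule sum_mono)
        fix i
        have "\<bar>(p - z) $ i\<bar> = z $ i - p $ i" using zi[of i] by simp
        also have "\<dots> \<le> r / (2 * d)" using zi[of i] by linarith
        finally show "\<bar>(p - z) $ i\<bar> \<le> r / (2 * d)" .
      qed
      also have "\<dots> = r / 2" unfolding d_def by simp
      finally show ?thesis using r by simp
    qed
    ultimately show "z \<in> tball x0 r" unfolding tball_def by simp
  qed
  have "measure lborel (cbox p q) = (\<Prod>i\<in>UNIV. q $ i - p $ i)"
  proof (intro content_cbox_cart)
    have "p \<in> cbox p q" using pq by (simp add: mem_box_cart)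
    thus "cbox p q \<noteq> {}" by blast
  qed
  also have "\<dots> > 0" using dpos unfolding q_def by (intro prod_pos) auto
  finally have "0 < measure lborel (cbox p q)" .
  also have "\<dots> \<le> measure lborel (tball x0 r)"
    by (rule measure_mono_fmeasurable[OF sub _ tball_fmeas]) auto
  finally show ?thesis .
qed

lemma th_nonneg_all: "\<beta> > 0 \<Longrightarrow> 0 \<le> th \<beta> t"
  using th_pos_all[of \<beta> t] by simp

lemma hk_pos:
  fixes x :: "real^'n"
  assumes e: "\<epsilon> > 0"
  shows "heat_kernel \<epsilon> x > 0"
proof -
  have "(\<Prod>i\<in>UNIV. th (1 / (2 * \<epsilon>)) (x $ i)) > 0"
    using e by (intro prod_pos th_pos_all) auto
  moreover have "(2 * pi * \<epsilon>) powr (- (real CARD('n) / 2)) > 0" using e by simp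
  ultimately show ?thesis unfolding heat_kernel_prod[OF e] by simp
qed

lemma hk_ratio:
  fixes u v :: "real^'n"
  assumes e: "\<epsilon> > 0"
  shows "heat_kernel \<epsilon> u \<le> exp (4 * pi\<^sup>2 * real CARD('n) / \<epsilon>) * heat_kernel \<epsilon> v"
proof -
  define \<beta> where "\<beta> = 1 / (2 * \<epsilon>)"
  have b: "\<beta> > 0" unfolding \<beta>_def using e by simp
  define c where "c = (2 * pi * \<epsilon>) powr (- (real CARD('n) / 2))"
  have c: "c > 0" unfolding c_def using e by simp
  define E where "E = exp (4 * pi\<^sup>2 * real CARD('n) / \<epsilon>)"
  have Ku: "heat_kernel \<epsilon> u = c * (\<Prod>i\<in>UNIV. th \<beta> (u $ i))"
    using heat_kernel_prod[OF e, of u] unfolding c_def \<beta>_def by simp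
  have Kv: "heat_kernel \<epsilon> v = c * (\<Prod>i\<in>UNIV. th \<beta> (v $ i))"
    using heat_kernel_prod[OF e, of v] unfolding c_def \<beta>_def by simp
  have "(\<Prod>i\<in>UNIV. th \<beta> (u $ i)) \<le> (\<Prod>i\<in>(UNIV::'n set). exp (8 * pi\<^sup>2 * \<beta>) * th \<beta> (v $ i))"
    by (intro prod_mono conjI th_nonneg_all[OF b] th_ratio[OF b])
  also have "\<dots> = exp (8 * pi\<^sup>2 * \<beta>) ^ CARD('n) * (\<Prod>i\<in>UNIV. th \<beta> (v $ i))"
    by (simp only: prod.distrib prod_constant)
  also have "exp (8 * pi\<^sup>2 * \<beta>) ^ CARD('n) = exp (real CARD('n) * (8 * pi\<^sup>2 * \<beta>))"
    by (rule exp_of_nat_mult[symmetric])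
  also have "real CARD('n) * (8 * pi\<^sup>2 * \<beta>) = 4 * pi\<^sup>2 * real CARD('n) / \<epsilon>"
    unfolding \<beta>_def using e by (simp add: field_simps)
  finally have P: "(\<Prod>i\<in>UNIV. th \<beta> (u $ i)) \<le> E * (\<Prod>i\<in>UNIV. th \<beta> (v $ i))"
    unfolding E_def .
  have "heat_kernel \<epsilon> u \<le> c * (E * (\<Prod>i\<in>UNIV. th \<beta> (v $ i)))"
    unfolding Ku using P c by (intro mult_left_mono) auto
  also have "\<dots> = E * heat_kernel \<epsilon> v" unfolding Kv by (simp only: mult.left_commute)
  finally show ?thesis unfolding E_def .
qed

lemma gs_meas: "(\<lambda>c. gs \<beta> (c + a)) \<in> borel_measurable borel"
  unfolding gs_def by (intro borel_measurable_continuous_onI continuous_intros)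

lemma Ps_meas:
  assumes b: "\<beta> > 0"
  shows "Ps \<beta> \<in> borel_measurable borel"
proof (rule borel_measurable_LIMSEQ_real)
  fix c :: real
  show "(\<lambda>i. \<Sum>n<i. gs \<beta> (c + 2 * pi * real n)) \<longlonglongrightarrow> Ps \<beta> c"
    unfolding Ps_def using gs_summable[OF b] by (intro summable_LIMSEQ)
next
  fix i
  show "(\<lambda>c. \<Sum>n<i. gs \<beta> (c + 2 * pi * real n)) \<in> borel_measurable borel"
    by (intro borel_measurable_sum gs_meas)
qed

lemma th_meas:
  assumes b: "\<beta> > 0"
  shows "th \<beta> \<in> borel_measurable borel"
proof -
  have m2: "(\<lambda>t. 2 * pi - t) \<in> borel_measurable borel"
    by (intro borel_measurable_continuous_onI continuous_intros)
  have "(\<lambda>t. Ps \<beta> t + Ps \<beta> (2 * pi - t)) \<in> borel_measurable borel"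
    by (intro borel_measurable_add Ps_meas[OF b] measurable_compose[OF m2 Ps_meas[OF b]])
  thus ?thesis unfolding th_def[abs_def] .
qed

lemma hk_meas:
  assumes e: "\<epsilon> > 0"
  shows "(heat_kernel \<epsilon> :: real^'n \<Rightarrow> real) \<in> borel_measurable borel"
proof -
  define \<beta> where "\<beta> = 1 / (2 * \<epsilon>)"
  have b: "\<beta> > 0" unfolding \<beta>_def using e by simp
  define c where "c = (2 * pi * \<epsilon>) powr (- (real CARD('n) / 2))"
  have m: "(\<lambda>x::real^'n. th \<beta> (x $ i)) \<in> borel_measurable borel" for i
    by (rule measurable_compose[OF vec_nth_meas th_meas[OF b]])
  have mp: "(\<lambda>x::real^'n. \<Prod>i\<in>UNIV. th \<beta> (x $ i)) \<in> borel_measurable borel"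
    by (rule borel_measurable_prod) (rule m)
  have mc: "(\<lambda>x::real^'n. c * (\<Prod>i\<in>UNIV. th \<beta> (x $ i))) \<in> borel_measurable borel"
    by (rule borel_measurable_times[OF borel_measurable_const mp])
  have eq: "heat_kernel \<epsilon> x = c * (\<Prod>i\<in>UNIV. th \<beta> (x $ i))" for x :: "real^'n"
    using heat_kernel_prod[OF e, of x] unfolding c_def \<beta>_def by simp
  have "heat_kernel \<epsilon> = (\<lambda>x::real^'n. c * (\<Prod>i\<in>UNIV. th \<beta> (x $ i)))"
    by (rule ext) (rule eq)
  thus ?thesis using mc by simp
qed

lemma torus_rep:
  fixes x :: "real^'n"
  shows "\<exists>k\<in>int_lattice. x - (2 * pi) *\<^sub>R k \<in> cbox 0 (\<chi> i. 2 * pi)"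
proof -
  define k :: "real^'n" where "k = (\<chi> i. of_int \<lfloor>x $ i / (2 * pi)\<rfloor>)"
  have kl: "k \<in> int_lattice" unfolding k_def int_lattice_def by auto
  have p: "0 \<le> (x - (2 * pi) *\<^sub>R k) $ i" "(x - (2 * pi) *\<^sub>R k) $ i \<le> 2 * pi" for i
  proof -
    define y where "y = x $ i / (2 * pi)"
    have "of_int \<lfloor>y\<rfloor> \<le> y" "y \<le> of_int \<lfloor>y\<rfloor> + 1"
      by linarith+
    hence "2 * pi * of_int \<lfloor>y\<rfloor> \<le> 2 * pi * y" "2 * pi * y \<le> 2 * pi * (of_int \<lfloor>y\<rfloor> + 1)"
      using pi_gt_zero by (intro mult_left_mono; simp)+
    hence "2 * pi * of_int \<lfloor>x $ i / (2 * pi)\<rfloor> \<le> x $ i" "x $ i \<le> 2 * pi * (of_int \<lfloor>x $ i / (2 * pi)\<rfloor> + 1)"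
      by (simp_all add: y_def)
    thus "0 \<le> (x - (2 * pi) *\<^sub>R k) $ i" "(x - (2 * pi) *\<^sub>R k) $ i \<le> 2 * pi"
      unfolding k_def by (simp_all add: algebra_simps)
  qed
  show ?thesis using kl p by (intro bexI[of _ k]) (auto simp: mem_box_cart)
qed

lemma periodic_bounded:
  fixes f :: "real^'n \<Rightarrow> real"
  assumes c: "continuous_on UNIV f" and p: "torus_periodic f"
  shows "\<exists>B. \<forall>x. \<bar>f x\<bar> \<le> B"
proof -
  have "compact (f ` cbox 0 (\<chi> i. 2 * pi))"
    by (rule compact_continuous_image[OF continuous_on_subset[OF c] compact_cbox]) simp
  from compact_imp_bounded[OF this] obtain B where B: "\<forall>y\<in>f ` cbox 0 (\<chi> i. 2 * pi). norm y \<le> B"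
    unfolding bounded_iff by blast
  have "\<bar>f x\<bar> \<le> B" for x
  proof -
    obtain k where k: "k \<in> int_lattice" "x - (2 * pi) *\<^sub>R k \<in> cbox 0 (\<chi> i. 2 * pi)"
      using torus_rep by blast
    have "f x = f ((x - (2 * pi) *\<^sub>R k) + (2 * pi) *\<^sub>R k)" by simp
    also have "\<dots> = f (x - (2 * pi) *\<^sub>R k)" using p k(1) unfolding torus_periodic_def by blast
    finally show ?thesis using B k(2) by auto
  qed
  thus ?thesis by blast
qed

lemma ctrans_facts:
  fixes \<mu> :: "(real^'n) measure" and \<phi> :: "real^'n \<Rightarrow> real"
  assumes mu: "prob_space \<mu>" "sets \<mu> = sets borel"
    and e: "\<epsilon> > 0"
    and phc: "continuous_on UNIV \<phi>" and php: "torus_periodic \<phi>"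
  shows "(\<lambda>y. exp (ctrans \<epsilon> \<mu> \<phi> y)) \<in> borel_measurable borel"
    and "\<And>y z. exp (ctrans \<epsilon> \<mu> \<phi> z) \<le> exp (4 * pi\<^sup>2 * real CARD('n)) * exp (ctrans \<epsilon> \<mu> \<phi> y)"
proof -
  interpret P: prob_space \<mu> by (rule mu(1))
  obtain B where B: "\<And>x. \<bar>\<phi> x\<bar> \<le> B" using periodic_bounded[OF phc php] by blast
  define K where "K = (heat_kernel \<epsilon> :: real^'n \<Rightarrow> real)"
  define C where "C = exp (4 * pi\<^sup>2 * real CARD('n) / \<epsilon>)"
  have Kpos: "K x > 0" for x unfolding K_def by (rule hk_pos[OF e])
  have Krat: "K u \<le> C * K v" for u v unfolding K_def C_def by (rule hk_ratio[OF e])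
  have Cpos: "C > 0" unfolding C_def by simp
  have Km: "K \<in> borel_measurable borel" unfolding K_def by (rule hk_meas[OF e])
  define h where "h y x = exp (\<phi> x / \<epsilon>) * K (x - y)" for y x
  have phm: "\<phi> \<in> borel_measurable borel" by (rule borel_measurable_continuous_onI[OF phc])
  have hm: "h y \<in> borel_measurable borel" for y
  proof -
    have "(\<lambda>x. x - y) \<in> borel_measurable borel"
      by (intro borel_measurable_continuous_onI continuous_intros)
    hence "(\<lambda>x. K (x - y)) \<in> borel_measurable borel" by (rule measurable_compose[OF _ Km])
    moreover have "(\<lambda>x. exp (\<phi> x / \<epsilon>)) \<in> borel_measurable borel"
      by (intro borel_measurable_continuous_onI continuous_intros phc) (use e in auto)
    ultimately show ?thesis unfolding h_def[abs_def] by (intro borel_measurable_times)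
  qed
  have meq: "borel_measurable \<mu> = borel_measurable borel"
    by (rule measurable_cong_sets[OF mu(2) refl])
  have hup: "h y x \<le> exp (B / \<epsilon>) * (C * K 0)" for y x
  proof -
    have "\<phi> x / \<epsilon> \<le> B / \<epsilon>" using B[of x] e by (intro divide_right_mono) auto
    hence "exp (\<phi> x / \<epsilon>) \<le> exp (B / \<epsilon>)" by simp
    moreover have "K (x - y) \<le> C * K 0" by (rule Krat)
    ultimately show ?thesis unfolding h_def using Kpos[of "x - y"] by (intro mult_mono) auto
  qed
  have hpos: "h y x > 0" for y x unfolding h_def using Kpos by simp
  have hint: "integrable \<mu> (h y)" for y
  proof (rule P.integrable_const_bound[where B = "exp (B / \<epsilon>) * (C * K 0)"])
    show "AE x in \<mu>. norm (h y x) \<le> exp (B / \<epsilon>) * (C * K 0)"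
      using hup hpos by (intro AE_I2) (simp add: abs_of_pos)
    show "h y \<in> borel_measurable \<mu>" unfolding meq by (rule hm)
  qed
  define F where "F y = (\<integral>x. h y x \<partial>\<mu>)" for y
  define L where "L = exp (- B / \<epsilon>) * (K 0 / C)"
  have Lpos: "L > 0" unfolding L_def using Kpos Cpos by simp
  have hlow: "L \<le> h y x" for y x
  proof -
    have "- B / \<epsilon> \<le> \<phi> x / \<epsilon>" using B[of x] e by (intro divide_right_mono) auto
    hence "exp (- B / \<epsilon>) \<le> exp (\<phi> x / \<epsilon>)" by simp
    moreover have "K 0 / C \<le> K (x - y)" using Krat[of 0 "x - y"] Cpos by (simp add: field_simps)
    ultimately show ?thesis unfolding h_def L_def using Kpos[of 0] Cpos by (intro mult_mono) auto
  qed
  have Flow: "L \<le> F y" for y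
  proof -
    have "(\<integral>x. L \<partial>\<mu>) \<le> F y" unfolding F_def by (intro integral_mono hint hlow) simp
    thus ?thesis using P.prob_space by simp
  qed
  have Fpos: "F y > 0" for y using Flow[of y] Lpos by simp
  have Frat: "F y \<le> C * F z" for y z
  proof -
    have "F y \<le> (\<integral>x. C * h z x \<partial>\<mu>)" unfolding F_def
      by (intro integral_mono hint integrable_mult_right) (use Krat Cpos in \<open>auto simp: h_def mult.left_commute\<close>)
    thus ?thesis unfolding F_def by simp
  qed
  have ct: "ctrans \<epsilon> \<mu> \<phi> y = - \<epsilon> * ln (F y)" for y
  proof -
    have "exp ((\<phi> x - cost_eps \<epsilon> x y) / \<epsilon>) = h y x" for x
    proof -
      have "(\<phi> x - cost_eps \<epsilon> x y) / \<epsilon> = \<phi> x / \<epsilon> + ln (K (x - y))"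
        unfolding cost_eps_def K_def using e by (simp add: field_simps)
      thus ?thesis unfolding h_def using Kpos[of "x - y"] by (simp add: exp_add)
    qed
    thus ?thesis unfolding ctrans_def F_def by simp
  qed
  have pm: "(\<lambda>p::(real^'n) \<times> (real^'n). h (fst p) (snd p)) \<in> borel_measurable borel"
  proof -
    have "(\<lambda>p::(real^'n) \<times> (real^'n). snd p - fst p) \<in> borel_measurable borel"
      by (intro borel_measurable_continuous_onI continuous_intros)
    hence "(\<lambda>p::(real^'n) \<times> (real^'n). K (snd p - fst p)) \<in> borel_measurable borel"
      by (rule measurable_compose[OF _ Km])
    moreover have "(\<lambda>p::(real^'n) \<times> (real^'n). exp (\<phi> (snd p) / \<epsilon>)) \<in> borel_measurable borel"
      by (intro borel_measurable_continuous_onI continuous_intros continuous_on_compose2[OF phc]) (use e in auto)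
    ultimately show ?thesis unfolding h_def by (intro borel_measurable_times)
  qed
  have pm2: "case_prod h \<in> borel_measurable ((borel :: (real^'n) measure) \<Otimes>\<^sub>M \<mu>)"
  proof -
    have "borel_measurable ((borel :: (real^'n) measure) \<Otimes>\<^sub>M \<mu>) = borel_measurable (borel \<Otimes>\<^sub>M borel :: ((real^'n) \<times> (real^'n)) measure)"
      by (rule measurable_cong_sets[OF sets_pair_measure_cong[OF refl mu(2)] refl])
    also have "\<dots> = borel_measurable borel" by (simp only: borel_prod)
    finally have EQ: "borel_measurable ((borel :: (real^'n) measure) \<Otimes>\<^sub>M \<mu>) = borel_measurable borel" .
    have cp: "case_prod h = (\<lambda>p. h (fst p) (snd p))" by (rule ext) (simp add: case_prod_beta)
    show ?thesis unfolding EQ cp by (rule pm)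
  qed
  have Fm: "F \<in> borel_measurable borel"
    unfolding F_def by (rule P.borel_measurable_lebesgue_integral[OF pm2])
  have gm: "(\<lambda>t::real. exp (- \<epsilon> * ln t)) \<in> borel_measurable borel" by measurable
  show "(\<lambda>y. exp (ctrans \<epsilon> \<mu> \<phi> y)) \<in> borel_measurable borel"
    unfolding ct using measurable_compose[OF Fm gm] by simp
  fix y z
  have "ln (F y) \<le> ln (C * F z)" using Frat[of y z] Fpos[of y] by simp
  also have "\<dots> = 4 * pi\<^sup>2 * real CARD('n) / \<epsilon> + ln (F z)"
    using Cpos Fpos[of z] unfolding C_def by (simp add: ln_mult)
  finally have "- \<epsilon> * ln (F z) \<le> 4 * pi\<^sup>2 * real CARD('n) + (- \<epsilon> * ln (F y))"
    using e by (simp add: field_simps)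
  hence "exp (- \<epsilon> * ln (F z)) \<le> exp (4 * pi\<^sup>2 * real CARD('n) + (- \<epsilon> * ln (F y)))"
    by (simp only: exp_le_cancel_iff)
  also have "\<dots> = exp (4 * pi\<^sup>2 * real CARD('n)) * exp (- \<epsilon> * ln (F y))" by (rule exp_add)
  finally show "exp (ctrans \<epsilon> \<mu> \<phi> z) \<le> exp (4 * pi\<^sup>2 * real CARD('n)) * exp (ctrans \<epsilon> \<mu> \<phi> y)"
    unfolding ct .
qed

lemma set_integrable_const_Q:
  fixes Q :: "(real^'n) set"
  assumes "Q \<in> sets lborel" "emeasure lborel Q < \<infinity>"
  shows "set_integrable lborel Q (\<lambda>_. c::real)"
  unfolding set_integrable_def using assms by (intro integrable_indicator)

lemma set_integrable_bounded_Q: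
  fixes Q :: "(real^'n) set" and g :: "real^'n \<Rightarrow> real"
  assumes Q: "Q \<in> sets lborel" "emeasure lborel Q < \<infinity>"
    and gm: "g \<in> borel_measurable borel" and gb: "\<And>x. x \<in> Q \<Longrightarrow> \<bar>g x\<bar> \<le> c"
  shows "set_integrable lborel Q g"
proof (rule set_integrable_bound[OF set_integrable_const_Q[OF Q, of c]])
  show "set_borel_measurable lborel Q g"
    unfolding set_borel_measurable_def using Q(1) gm
    by (intro borel_measurable_scaleR borel_measurable_indicator) auto
  show "AE x in lborel. x \<in> Q \<longrightarrow> norm (g x) \<le> norm c"
    using gb by (intro AE_I2) (auto, smt (verit) abs_ge_zero)
qed

lemma set_integral_const_Q:
  fixes Q :: "(real^'n) set"
  assumes "Q \<in> sets lborel" "emeasure lborel Q < \<infinity>"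
  shows "(\<integral>x\<in>Q. c \<partial>lborel) = c * measure lborel Q"
  using set_integral_const[OF assms(1) less_imp_neq[OF assms(2)], of c] by simp

theorem lemma3p6:
  fixes \<mu> :: "(real^'n) measure" and \<epsilon> \<alpha> R r m\<^sub>\<nu> M\<^sub>\<nu> :: real
    and x0 :: "real^'n" and \<nu> :: "real^'n \<Rightarrow> real"
  assumes mu: "prob_space \<mu>" "sets \<mu> = sets borel"
    and eps: "\<epsilon> > 0"
    and alpha: "\<alpha> > 0" and R: "R > 0"
    and conv: "torus_strongly_convex_on {x::real^'n. tdist 0 x < R} \<alpha> (\<lambda>x. (tdist 0 x)\<^sup>2)"
    and rR: "r < R"
    and nu_meas: "\<nu> \<in> borel_measurable borel"
    and nu_per: "torus_periodic \<nu>"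
    and nu_nonneg: "\<And>x. \<nu> x \<ge> 0"
    and nu_int: "set_integrable lborel torus_cube \<nu>"
    and nu_prob: "(\<integral>x\<in>torus_cube. \<nu> x \<partial>lborel) = 1"
    and m_pos: "0 < m\<^sub>\<nu>" and mM: "m\<^sub>\<nu> \<le> M\<^sub>\<nu>"
    and nu_bounds: "\<And>x. x \<in> tball x0 r \<Longrightarrow> m\<^sub>\<nu> \<le> \<nu> x \<and> \<nu> x \<le> M\<^sub>\<nu>"
  shows "\<forall>\<phi>. continuous_on UNIV \<phi> \<and> torus_periodic \<phi> \<longrightarrow>
    (\<forall>y\<in>tball x0 r.
      (let Q = tball x0 r;
           d = real CARD('n);
           \<nu>Q = (\<integral>x\<in>Q. \<nu> x \<partial>lborel);
           \<nu>\<^sub>Q = (\<lambda>x. \<nu> x / \<nu>Q);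
           Z\<^sub>Q = (\<integral>x\<in>Q. exp (- (tdist x0 x)\<^sup>2 / \<alpha>) \<partial>lborel);
           \<gamma>\<^sub>Q = (\<lambda>x. exp (- (tdist x0 x)\<^sup>2 / \<alpha>) / Z\<^sub>Q);
           T = ctrans \<epsilon> \<mu> \<phi>;
           \<gamma>\<^sub>Q\<phi> = (\<lambda>x. \<gamma>\<^sub>Q x * exp (T x) / (\<integral>z\<in>Q. exp (T z) * \<gamma>\<^sub>Q z \<partial>lborel));
           volQ = measure lborel Q
       in m\<^sub>\<nu> * exp (- (r\<^sup>2 / \<alpha>) - 4 * pi\<^sup>2 * d) * (volQ / \<nu>Q) \<le> \<nu>\<^sub>Q y / \<gamma>\<^sub>Q\<phi> y
        \<and> \<nu>\<^sub>Q y / \<gamma>\<^sub>Q\<phi> y \<le> M\<^sub>\<nu> * exp (r\<^sup>2 / \<alpha> + 4 * pi\<^sup>2 * d) * (volQ / \<nu>Q)))"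
proof (intro allI impI ballI)
  fix \<phi> :: "real^'n \<Rightarrow> real" and y :: "real^'n"
  assume phi: "continuous_on UNIV \<phi> \<and> torus_periodic \<phi>" and yQ: "y \<in> tball x0 r"
  define Q where "Q = tball x0 r"
  define d where "d = real CARD('n)"
  define e4 where "e4 = exp (4 * pi\<^sup>2 * d)"
  define G where "G z = exp (- (tdist x0 z)\<^sup>2 / \<alpha>)" for z
  define E where "E z = exp (ctrans \<epsilon> \<mu> \<phi> z)" for z
  define Z where "Z = (\<integral>x\<in>Q. G x \<partial>lborel)"
  define J where "J = (\<integral>x\<in>Q. E x * G x \<partial>lborel)"
  define I where "I = (\<integral>z\<in>Q. E z * (G z / Z) \<partial>lborel)"
  define nQ where "nQ = (\<integral>x\<in>Q. \<nu> x \<partial>lborel)"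
  define vol where "vol = measure lborel Q"
  have yQ': "y \<in> Q" using yQ unfolding Q_def .
  have r: "r > 0" using yQ tdist_nonneg[of x0 y] unfolding tball_def by auto
  have Qs: "Q \<in> sets lborel" unfolding Q_def using tball_sets by simp
  have Qf: "emeasure lborel Q < \<infinity>" unfolding Q_def by (rule tball_fin)
  have volpos: "vol > 0" unfolding vol_def Q_def by (rule tball_pos[OF r])
  have e4pos: "e4 > 0" unfolding e4_def by simp
  have Gb: "exp (- (r\<^sup>2 / \<alpha>)) \<le> G z \<and> G z \<le> 1" if "z \<in> Q" for z
  proof -
    have t: "0 \<le> tdist x0 z" "tdist x0 z < r" using that tdist_nonneg unfolding Q_def tball_def by auto
    have "(tdist x0 z)\<^sup>2 \<le> r\<^sup>2" using t by (intro power_mono) auto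
    hence "(tdist x0 z)\<^sup>2 / \<alpha> \<le> r\<^sup>2 / \<alpha>" using alpha by (intro divide_right_mono) auto
    moreover have "0 \<le> (tdist x0 z)\<^sup>2 / \<alpha>" using alpha by simp
    ultimately show ?thesis unfolding G_def by auto
  qed
  have Gpos: "G z > 0" for z unfolding G_def by simp
  have Gm: "G \<in> borel_measurable borel"
  proof -
    have "(\<lambda>z. exp (- (tdist x0 z)\<^sup>2 / \<alpha>)) \<in> borel_measurable borel"
      using tdist_meas[of x0] by measurable
    thus ?thesis unfolding G_def[abs_def] .
  qed
  have Em: "E \<in> borel_measurable borel"
    unfolding E_def[abs_def] by (rule ctrans_facts(1)[OF mu eps conjunct1[OF phi] conjunct2[OF phi]])
  have Erat: "E z \<le> e4 * E w" for z w
    unfolding E_def e4_def d_def by (rule ctrans_facts(2)[OF mu eps conjunct1[OF phi] conjunct2[OF phi]])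
  have Epos: "E z > 0" for z unfolding E_def by simp
  have Eb: "E y / e4 \<le> E z \<and> E z \<le> e4 * E y" for z
    using Erat[of z y] Erat[of y z] e4pos by (simp add: field_simps)
  have intG: "set_integrable lborel Q G"
    by (rule set_integrable_bounded_Q[OF Qs Qf Gm, of 1]) (use Gb Gpos in \<open>auto simp: abs_of_pos\<close>)
  have intEG: "set_integrable lborel Q (\<lambda>x. E x * G x)"
  proof (rule set_integrable_bounded_Q[OF Qs Qf _, of _ "e4 * E y"])
    show "(\<lambda>x. E x * G x) \<in> borel_measurable borel" using Em Gm by (rule borel_measurable_times)
    fix x assume "x \<in> Q"
    hence "E x * G x \<le> e4 * E y * 1" using Eb[of x] Gb[of x] Epos[of x] Gpos[of x] by (intro mult_mono) auto
    thus "\<bar>E x * G x\<bar> \<le> e4 * E y" using Epos[of x] Gpos[of x] by (simp add: abs_of_pos)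
  qed
  have intnu: "set_integrable lborel Q \<nu>"
  proof (rule set_integrable_subset[OF nu_int])
    show "Q \<in> sets lborel" by (rule Qs)
    show "Q \<subseteq> torus_cube" unfolding Q_def tball_def by auto
  qed
  have cQ: "set_integrable lborel Q (\<lambda>_. c::real)" for c by (rule set_integrable_const_Q[OF Qs Qf])
  have iconst: "(\<integral>x\<in>Q. c \<partial>lborel) = c * vol" for c unfolding vol_def by (rule set_integral_const_Q[OF Qs Qf])
  have Zlow: "exp (- (r\<^sup>2 / \<alpha>)) * vol \<le> Z"
    unfolding Z_def iconst[symmetric] by (rule set_integral_mono[OF cQ intG]) (use Gb in auto)
  have Zpos: "Z > 0" using Zlow volpos by (smt (verit) exp_gt_zero mult_pos_pos)
  have Jlow: "(E y / e4 * exp (- (r\<^sup>2 / \<alpha>))) * vol \<le> J"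
    unfolding J_def iconst[symmetric]
  proof (rule set_integral_mono[OF cQ intEG])
    fix x assume "x \<in> Q"
    thus "E y / e4 * exp (- (r\<^sup>2 / \<alpha>)) \<le> E x * G x" using Eb[of x] Gb[of x] Epos[of x] Epos[of y] e4pos
      by (intro mult_mono) auto
  qed
  have Jup: "J \<le> (e4 * E y) * vol"
    unfolding J_def iconst[symmetric]
  proof (rule set_integral_mono[OF intEG cQ])
    fix x assume "x \<in> Q"
    hence "E x * G x \<le> e4 * E y * 1" using Eb[of x] Gb[of x] Epos[of x] Gpos[of x] by (intro mult_mono) auto
    thus "E x * G x \<le> e4 * E y" by simp
  qed
  have Jpos: "J > 0" using Jlow volpos Epos[of y] e4pos by (smt (verit) exp_gt_zero mult_pos_pos divide_pos_pos)
  have IJ: "I = J / Z"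
  proof -
    have "I = (\<integral>z\<in>Q. E z * G z / Z \<partial>lborel)" unfolding I_def by simp
    also have "\<dots> = J / Z" unfolding J_def by (rule set_integral_divide_zero)
    finally show ?thesis .
  qed
  have nQlow: "m\<^sub>\<nu> * vol \<le> nQ"
    unfolding nQ_def iconst[symmetric]
    by (rule set_integral_mono[OF cQ intnu]) (use nu_bounds in \<open>auto simp: Q_def\<close>)
  have nQpos: "nQ > 0" using nQlow volpos m_pos by (smt (verit) mult_pos_pos)
  have nuy: "m\<^sub>\<nu> \<le> \<nu> y" "\<nu> y \<le> M\<^sub>\<nu>" using nu_bounds yQ by auto
  define R where "R = \<nu> y / nQ / (G y / Z * E y / I)"
  have Req: "R = (\<nu> y / nQ) * (J / (G y * E y))"
    unfolding R_def IJ using Zpos Gpos[of y] Epos[of y] Jpos nQpos by (simp add: field_simps)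
  have Gy: "exp (- (r\<^sup>2 / \<alpha>)) \<le> G y" "G y \<le> 1" using Gb[OF yQ'] by auto
  have low1: "vol * exp (- (r\<^sup>2 / \<alpha>)) / e4 \<le> J / (G y * E y)"
  proof -
    have "vol * exp (- (r\<^sup>2 / \<alpha>)) / e4 = (E y / e4 * exp (- (r\<^sup>2 / \<alpha>))) * vol / (1 * E y)"
      using Epos[of y] by (simp add: field_simps)
    also have "\<dots> \<le> J / (1 * E y)" using Jlow Epos[of y] by (intro divide_right_mono) auto
    also have "\<dots> \<le> J / (G y * E y)"
      using Jpos Gy Gpos[of y] Epos[of y] by (intro divide_left_mono mult_right_mono mult_pos_pos) auto
    finally show ?thesis .
  qed
  have up1: "J / (G y * E y) \<le> vol * e4 / exp (- (r\<^sup>2 / \<alpha>))"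
  proof -
    have "J / (G y * E y) \<le> (e4 * E y) * vol / (G y * E y)"
      using Jup Gpos[of y] Epos[of y] by (intro divide_right_mono) auto
    also have "\<dots> \<le> (e4 * E y) * vol / (exp (- (r\<^sup>2 / \<alpha>)) * E y)"
      using Gy Gpos[of y] Epos[of y] e4pos volpos
      by (intro divide_left_mono mult_right_mono mult_pos_pos mult_nonneg_nonneg) auto
    also have "\<dots> = vol * e4 / exp (- (r\<^sup>2 / \<alpha>))" using Epos[of y] by (simp add: field_simps)
    finally show ?thesis .
  qed
  have lowR: "m\<^sub>\<nu> * exp (- (r\<^sup>2 / \<alpha>) - 4 * pi\<^sup>2 * d) * (vol / nQ) \<le> R"
  proof -
    have "m\<^sub>\<nu> * exp (- (r\<^sup>2 / \<alpha>) - 4 * pi\<^sup>2 * d) * (vol / nQ) = (m\<^sub>\<nu> / nQ) * (vol * exp (- (r\<^sup>2 / \<alpha>)) / e4)"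
      unfolding e4_def by (simp add: exp_diff field_simps)
    also have "\<dots> \<le> (\<nu> y / nQ) * (J / (G y * E y))"
      using nuy nQpos low1 m_pos volpos e4pos by (intro mult_mono divide_right_mono) auto
    finally show ?thesis unfolding Req .
  qed
  have upR: "R \<le> M\<^sub>\<nu> * exp (r\<^sup>2 / \<alpha> + 4 * pi\<^sup>2 * d) * (vol / nQ)"
  proof -
    have "R \<le> (M\<^sub>\<nu> / nQ) * (vol * e4 / exp (- (r\<^sup>2 / \<alpha>)))"
      unfolding Req using nuy nQpos up1 Jpos Gpos[of y] Epos[of y] m_pos
      by (intro mult_mono divide_right_mono) auto
    also have "\<dots> = M\<^sub>\<nu> * exp (r\<^sup>2 / \<alpha> + 4 * pi\<^sup>2 * d) * (vol / nQ)"
      unfolding e4_def by (simp add: exp_add exp_minus field_simps)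
    finally show ?thesis .
  qed
  show "let Q = tball x0 r;
           d = real CARD('n);
           \<nu>Q = (\<integral>x\<in>Q. \<nu> x \<partial>lborel);
           \<nu>\<^sub>Q = (\<lambda>x. \<nu> x / \<nu>Q);
           Z\<^sub>Q = (\<integral>x\<in>Q. exp (- (tdist x0 x)\<^sup>2 / \<alpha>) \<partial>lborel);
           \<gamma>\<^sub>Q = (\<lambda>x. exp (- (tdist x0 x)\<^sup>2 / \<alpha>) / Z\<^sub>Q);
           T = ctrans \<epsilon> \<mu> \<phi>;
           \<gamma>\<^sub>Q\<phi> = (\<lambda>x. \<gamma>\<^sub>Q x * exp (T x) / (\<integral>z\<in>Q. exp (T z) * \<gamma>\<^sub>Q z \<partial>lborel));
           volQ = measure lborel Q
       in m\<^sub>\<nu> * exp (- (r\<^sup>2 / \<alpha>) - 4 * pi\<^sup>2 * d) * (volQ / \<nu>Q) \<le> \<nu>\<^sub>Q y / \<gamma>\<^sub>Q\<phi> y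
        \<and> \<nu>\<^sub>Q y / \<gamma>\<^sub>Q\<phi> y \<le> M\<^sub>\<nu> * exp (r\<^sup>2 / \<alpha> + 4 * pi\<^sup>2 * d) * (volQ / \<nu>Q)"
    unfolding Let_def using lowR upR
    unfolding R_def Q_def[symmetric] d_def[symmetric] G_def[symmetric] E_def[symmetric]
      Z_def[symmetric] I_def[symmetric] nQ_def[symmetric] vol_def[symmetric]
    by simp
qed

end
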